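(* Let $\mathbf{P}$ be a poset and let $\phi\in\mathcal{FO}(\forall,\exists,\wedge)$ be a sentence in reduced form. If there exists $p\in P$ such that $m\le^{\mathbf{P}}p\le^{\mathbf{P}}M$ for every minimal element $m$ of $\mathbf{P}$ and every maximal element $M$ of $\mathbf{P}$, then $\mathbf{P}\models\phi$.
   Context: $\mathcal{FO}(\forall,\exists,\wedge)$ denotes the class of first-order sentences over the vocabulary $\{\le\}$ built from atoms using only $\forall,\exists,\wedge$. All posets are finite with at least two elements. A sentence in alternating prefix form is $\phi=\forall x_1\exists y_1\ldots\forall x_l\exists y_l\,C$ with $l\ge0$, distinct variables, and $C$ a conjunction of atoms $u\le v$ over $\{x_1,y_1,\ldots,x_l,y_l\}$. It is represented by the prefix chain $\mathbf{Q}_\phi$ on $\{x_1,y_1,\ldots,x_l,y_l\}$ ordered $x_1<y_1<\cdots<x_l<y_l$ and the digraph $\mathbf{M}_\phi$ on the same set with an edge $(u,v)$ iff $u\le v$ is an atom of $C$. Let $M^\forall_\phi=\{x_1,\ldots,x_l\}$ and $M^\exists_\phi=\{y_1,\ldots,y_l\}$. $\phi$ is in reduced form if: (i) $\mathbf{M}_\phi$ is a poset; (ii) the elements of $M^\forall_\phi$ are pairwise incomparable in $\mathbf{M}_\phi$; (iii) for distinct $x,x'\in M^\forall_\phi$, their upsets in $\mathbf{M}_\phi$ are disjoint and their downsets in $\mathbf{M}_\phi$ are disjoint; (iv) for every $x\in M^\forall_\phi$ and every $y\in M^\exists_\phi$ comparable to $x$ in $\mathbf{M}_\phi$, $x$ precedes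 $y$ in $\mathbf{Q}_\phi$. *)

theory Defs
  imports Main
begin

text \<open>Variables of a sentence in alternating prefix form
  forall x_1 exists y_1 ... forall x_l exists y_l C : X i is x_i, Y i is y_i (1 <= i <= l).
  Distinctness of the variables is built into this encoding.\<close>
datatype var = X nat | Y nat

text \<open>A sentence is given by its length l and the set C of atoms (u,v), each meaning u <= v.\<close>
definition vars :: "nat \<Rightarrow> var set" where
  "vars l = {X i | i. 1 \<le> i \<and> i \<le> l} \<union> {Y i | i. 1 \<le> i \<and> i \<le> l}"

definition wf_sentence :: "nat \<Rightarrow> (var \<times> var) set \<Rightarrow> bool" where
  "wf_sentence l C \<longleftrightarrow> C \<subseteq> vars l \<times> vars l"

fun pos :: "var \<Rightarrow> nat" where
  "pos (X i) = 2 * i"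
| "pos (Y i) = 2 * i + 1"

definition reduced_form :: "nat \<Rightarrow> (var \<times> var) set \<Rightarrow> bool" where
  "reduced_form l C \<longleftrightarrow>
     partial_order_on (vars l) C \<and>
     (\<forall>i j. 1 \<le> i \<and> i \<le> l \<and> 1 \<le> j \<and> j \<le> l \<and> i \<noteq> j \<longrightarrow>
        (X i, X j) \<notin> C) \<and>
     (\<forall>i j. 1 \<le> i \<and> i \<le> l \<and> 1 \<le> j \<and> j \<le> l \<and> i \<noteq> j \<longrightarrow>
        (\<nexists>v. (X i, v) \<in> C \<and> (X j, v) \<in> C) \<and> (\<nexists>v. (v, X i) \<in> C \<and> (v, X j) \<in> C)) \<and>
     (\<forall>i j. 1 \<le> i \<and> i \<le> l \<and> 1 \<le> j \<and> j \<le> l \<and>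
        ((X i, Y j) \<in> C \<or> (Y j, X i) \<in> C) \<longrightarrow> pos (X i) < pos (Y j))"

text \<open>Satisfaction in a poset (the type 'a with its order). models_aux C l n s:
  n quantifier pairs remain, the next one is for index l - n + 1.\<close>
definition holds :: "(var \<times> var) set \<Rightarrow> (var \<Rightarrow> 'a::order) \<Rightarrow> bool" where
  "holds C s \<longleftrightarrow> (\<forall>(u, v) \<in> C. s u \<le> s v)"

fun models_aux :: "(var \<times> var) set \<Rightarrow> nat \<Rightarrow> nat \<Rightarrow> (var \<Rightarrow> 'a::order) \<Rightarrow> bool" where
  "models_aux C l 0 s = holds C s"
| "models_aux C l (Suc n) s =
     (\<forall>a. \<exists>b. models_aux C l n (s(X (l - n) := a, Y (l - n) := b)))"

definition models :: "'a::order itself \<Rightarrow> nat \<Rightarrow> (var \<times> var) set \<Rightarrow> bool" where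
  "models _ l C \<longleftrightarrow> models_aux C l l (\<lambda>_. undefined :: 'a)"

definition minimal :: "'a::order \<Rightarrow> bool" where
  "minimal m \<longleftrightarrow> (\<forall>x. x \<le> m \<longrightarrow> x = m)"

definition maximal :: "'a::order \<Rightarrow> bool" where
  "maximal M \<longleftrightarrow> (\<forall>x. M \<le> x \<longrightarrow> x = M)"

end

theory Submission
  imports Defs
begin

lemma ex_max: "\<exists>M::'a::{order,finite}. a \<le> M \<and> maximal M"
proof -
  obtain m where "m \<in> (UNIV::'a set)" "a \<le> m" "\<forall>b\<in>UNIV. m \<le> b \<longrightarrow> m = b"
    using finite_has_maximal2[of "UNIV::'a set" a] by auto
  thus ?thesis unfolding maximal_def by auto
qed

lemma ex_min: "\<exists>M::'a::{order,finite}. M \<le> a \<and> minimal M"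
proof -
  obtain m where "m \<in> (UNIV::'a set)" "m \<le> a" "\<forall>b\<in>UNIV. b \<le> m \<longrightarrow> m = b"
    using finite_has_minimal2[of "UNIV::'a set" a] by auto
  thus ?thesis unfolding minimal_def by auto
qed

lemma strategy:
  fixes G :: "(var \<Rightarrow> 'a::order) \<Rightarrow> nat \<Rightarrow> 'a"
  assumes dep: "\<And>s t j. 1 \<le> j \<Longrightarrow> j \<le> l \<Longrightarrow> (\<forall>i\<le>j. s (X i) = t (X i)) \<Longrightarrow> G s j = G t j"
    and win: "\<And>s. (\<forall>j. 1 \<le> j \<and> j \<le> l \<longrightarrow> s (Y j) = G s j) \<Longrightarrow> holds C s"
  shows "n \<le> l \<Longrightarrow> (\<forall>j. 1 \<le> j \<and> j \<le> l - n \<longrightarrow> s (Y j) = G s j) \<Longrightarrow> models_aux C l n s"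
proof (induction n arbitrary: s)
  case 0
  then show ?case using win by simp
next
  case (Suc n)
  show ?case unfolding models_aux.simps
  proof
    fix a
    define k where "k = l - n"
    have k1: "1 \<le> k" "k \<le> l" using Suc.prems(1) k_def by auto
    define b where "b = G (s(X k := a)) k"
    define s' where "s' = s(X k := a, Y k := b)"
    have "\<forall>j. 1 \<le> j \<and> j \<le> l - n \<longrightarrow> s' (Y j) = G s' j"
    proof (intro allI impI)
      fix j assume j: "1 \<le> j \<and> j \<le> l - n"
      show "s' (Y j) = G s' j"
      proof (cases "j = k")
        case True
        have "G s' k = G (s(X k := a)) k"
          using dep[of k s' "s(X k := a)"] k1 by (simp add: s'_def)
        then show ?thesis using True by (simp add: s'_def b_def)
      next
        case False
        hence jk: "j < k" using j k_def by auto
        have "G s' j = G s j"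
          using dep[of j s' s] jk j k1 by (simp add: s'_def)
        moreover have "s' (Y j) = s (Y j)" using False by (simp add: s'_def)
        moreover have "s (Y j) = G s j" using Suc.prems(2) jk k_def j Suc.prems(1) by auto
        ultimately show ?thesis by simp
      qed
    qed
    hence "models_aux C l n s'" using Suc.IH Suc.prems(1) by simp
    thus "\<exists>b. models_aux C l n (s(X (l - n) := a, Y (l - n) := b))"
      unfolding s'_def k_def by blast
  qed
qed

theorem proposition2:
  fixes l :: nat and C :: "(var \<times> var) set"
  assumes "wf_sentence l C"
    and "reduced_form l C"
    and "card (UNIV :: 'a set) \<ge> 2"
    and "\<exists>p::'a::{order,finite}. \<forall>m M. minimal m \<and> maximal M \<longrightarrow> m \<le> p \<and> p \<le> M"
  shows "models TYPE('a) l C"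
proof -
  obtain p :: 'a where p: "\<And>m M. minimal m \<Longrightarrow> maximal M \<Longrightarrow> m \<le> p \<and> p \<le> M"
    using assms(4) by blast
  obtain mx :: "'a \<Rightarrow> 'a" where mx: "\<And>a. a \<le> mx a \<and> maximal (mx a)"
    using ex_max by metis
  obtain mn :: "'a \<Rightarrow> 'a" where mn: "\<And>a. mn a \<le> a \<and> minimal (mn a)"
    using ex_min by metis
  have wf: "C \<subseteq> vars l \<times> vars l" using assms(1) wf_sentence_def by auto
  have po: "partial_order_on (vars l) C" using assms(2) reduced_form_def by auto
  have tr: "trans C" and an: "antisym C" and rf: "\<And>v. v \<in> vars l \<Longrightarrow> (v,v) \<in> C"
    using po unfolding partial_order_on_def preorder_on_def refl_on_def by auto
  have vX: "\<And>i. X i \<in> vars l \<longleftrightarrow> 1 \<le> i \<and> i \<le> l"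
    and vY: "\<And>i. Y i \<in> vars l \<longleftrightarrow> 1 \<le> i \<and> i \<le> l"
    unfolding vars_def by auto
  have mem: "\<And>u v. (u, v) \<in> C \<Longrightarrow> u \<in> vars l \<and> v \<in> vars l" using wf by auto
  note RF = assms(2)[unfolded reduced_form_def]
  have R2: "\<forall>i j. 1 \<le> i \<and> i \<le> l \<and> 1 \<le> j \<and> j \<le> l \<and> i \<noteq> j \<longrightarrow> (X i, X j) \<notin> C"
    using conjunct1[OF conjunct2[OF RF]] .
  have R3: "\<forall>i j. 1 \<le> i \<and> i \<le> l \<and> 1 \<le> j \<and> j \<le> l \<and> i \<noteq> j \<longrightarrow>
        (\<nexists>v. (X i, v) \<in> C \<and> (X j, v) \<in> C) \<and> (\<nexists>v. (v, X i) \<in> C \<and> (v, X j) \<in> C)"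
    using conjunct1[OF conjunct2[OF conjunct2[OF RF]]] .
  have R4: "\<forall>i j. 1 \<le> i \<and> i \<le> l \<and> 1 \<le> j \<and> j \<le> l \<and>
        ((X i, Y j) \<in> C \<or> (Y j, X i) \<in> C) \<longrightarrow> pos (X i) < pos (Y j)"
    using conjunct2[OF conjunct2[OF conjunct2[OF RF]]] .
  have inc: "\<And>i j. (X i, X j) \<in> C \<Longrightarrow> i = j"
  proof (rule ccontr)
    fix i j assume h: "(X i, X j) \<in> C" "i \<noteq> j"
    have "1 \<le> i \<and> i \<le> l \<and> 1 \<le> j \<and> j \<le> l" using mem[OF h(1)] vX by simp
    thus False using R2 h by blast
  qed
  have up: "\<And>i j v. (X i, v) \<in> C \<Longrightarrow> (X j, v) \<in> C \<Longrightarrow> i = j"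
  proof (rule ccontr)
    fix i j v assume h: "(X i, v) \<in> C" "(X j, v) \<in> C" "i \<noteq> j"
    have "1 \<le> i \<and> i \<le> l \<and> 1 \<le> j \<and> j \<le> l" using mem[OF h(1)] mem[OF h(2)] vX by simp
    hence "\<nexists>v. (X i, v) \<in> C \<and> (X j, v) \<in> C" using R3 h(3) by blast
    thus False using h by blast
  qed
  have dn: "\<And>i j v. (v, X i) \<in> C \<Longrightarrow> (v, X j) \<in> C \<Longrightarrow> i = j"
  proof (rule ccontr)
    fix i j v assume h: "(v, X i) \<in> C" "(v, X j) \<in> C" "i \<noteq> j"
    have "1 \<le> i \<and> i \<le> l \<and> 1 \<le> j \<and> j \<le> l" using mem[OF h(1)] mem[OF h(2)] vX by simp
    hence "\<nexists>v. (v, X i) \<in> C \<and> (v, X j) \<in> C" using R3 h(3) by blast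
    thus False using h by blast
  qed
  have ord: "\<And>i j. (X i, Y j) \<in> C \<or> (Y j, X i) \<in> C \<Longrightarrow> i \<le> j"
  proof -
    fix i j assume h: "(X i, Y j) \<in> C \<or> (Y j, X i) \<in> C"
    hence "1 \<le> i \<and> i \<le> l \<and> 1 \<le> j \<and> j \<le> l" using mem vX vY by blast
    hence "pos (X i) < pos (Y j)" using h R4 by blast
    thus "i \<le> j" by simp
  qed
  define G where "G = (\<lambda>(s::var \<Rightarrow> 'a) j.
     if \<exists>i. (X i, Y j) \<in> C then mx (s (X (SOME i. (X i, Y j) \<in> C)))
     else if \<exists>i. (Y j, X i) \<in> C then mn (s (X (SOME i. (Y j, X i) \<in> C)))
     else p)"
  have dep: "\<And>s t j. (\<forall>i\<le>j. s (X i) = t (X i)) \<Longrightarrow> G s j = G t j"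
  proof -
    fix s t :: "var \<Rightarrow> 'a" and j assume h: "\<forall>i\<le>j. s (X i) = t (X i)"
    show "G s j = G t j"
    proof (cases "\<exists>i. (X i, Y j) \<in> C")
      case True
      hence "(X (SOME i. (X i, Y j) \<in> C), Y j) \<in> C" by (rule someI_ex)
      hence "(SOME i. (X i, Y j) \<in> C) \<le> j" using ord by blast
      then show ?thesis using True h unfolding G_def by simp
    next
      case False
      show ?thesis
      proof (cases "\<exists>i. (Y j, X i) \<in> C")
        case True
        hence "(Y j, X (SOME i. (Y j, X i) \<in> C)) \<in> C" by (rule someI_ex)
        hence "(SOME i. (Y j, X i) \<in> C) \<le> j" using ord by blast
        then show ?thesis using True False h unfolding G_def by simp
      next
        case False2: False
        show ?thesis using False False2 unfolding G_def by simp
      qed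
    qed
  qed
  have win: "holds C s" if hs: "\<forall>j. 1 \<le> j \<and> j \<le> l \<longrightarrow> s (Y j) = G s j" for s
    unfolding holds_def
  proof (clarify)
    fix u v assume uv: "(u, v) \<in> C"
    have Ys: "\<And>j. (\<exists>w. (Y j, w) \<in> C \<or> (w, Y j) \<in> C) \<Longrightarrow> s (Y j) = G s j"
    proof -
      fix j assume "\<exists>w. (Y j, w) \<in> C \<or> (w, Y j) \<in> C"
      then obtain w where "(Y j, w) \<in> C \<or> (w, Y j) \<in> C" by blast
      hence "Y j \<in> vars l" using mem by blast
      hence "1 \<le> j \<and> j \<le> l" using vY by simp
      thus "s (Y j) = G s j" using hs by blast
    qed
    have G1: "\<And>i j. (X i, Y j) \<in> C \<Longrightarrow> G s j = mx (s (X i))"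
    proof -
      fix i j assume h: "(X i, Y j) \<in> C"
      hence "\<exists>i. (X i, Y j) \<in> C" by blast
      hence "(X (SOME i. (X i, Y j) \<in> C), Y j) \<in> C" by (rule someI_ex)
      hence "(SOME i. (X i, Y j) \<in> C) = i" using up h by blast
      thus "G s j = mx (s (X i))" using h unfolding G_def by auto
    qed
    have G2: "\<And>i j. (Y j, X i) \<in> C \<Longrightarrow> G s j = mn (s (X i))"
    proof -
      fix i j assume h: "(Y j, X i) \<in> C"
      have n1: "\<not> (\<exists>i. (X i, Y j) \<in> C)"
      proof
        assume "\<exists>i. (X i, Y j) \<in> C"
        then obtain i' where "(X i', Y j) \<in> C" by blast
        hence "(X i', X i) \<in> C" using h tr transD by fast
        hence "i' = i" using inc by blast
        hence "(X i, Y j) \<in> C" using \<open>(X i', Y j) \<in> C\<close> by simp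
        hence "Y j = X i" using an h antisymD by fast
        thus False by simp
      qed
      have "\<exists>i. (Y j, X i) \<in> C" using h by blast
      hence "(Y j, X (SOME i. (Y j, X i) \<in> C)) \<in> C" by (rule someI_ex)
      hence "(SOME i. (Y j, X i) \<in> C) = i" using dn h by blast
      thus "G s j = mn (s (X i))" using h n1 unfolding G_def by auto
    qed
    have G3: "\<And>j. \<not> (\<exists>i. (X i, Y j) \<in> C) \<Longrightarrow> \<not> (\<exists>i. (Y j, X i) \<in> C) \<Longrightarrow> G s j = p"
      unfolding G_def by auto
    have pmn: "\<And>x. mn x \<le> p"
    proof -
      fix x show "mn x \<le> p" using p[of "mn x" "mx x"] mn[of x] mx[of x] by simp
    qed
    have pmx: "\<And>x. p \<le> mx x"
    proof -
      fix x show "p \<le> mx x" using p[of "mn x" "mx x"] mn[of x] mx[of x] by simp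
    qed
    have mnx: "\<And>x y. mn x \<le> mx y" using pmn pmx order_trans by blast
    show "s u \<le> s v"
    proof (cases u)
      case (X i)
      show ?thesis
      proof (cases v)
        case (X i')
        then show ?thesis using uv \<open>u = X i\<close> inc by blast
      next
        case (Y j)
        have h: "(X i, Y j) \<in> C" using uv \<open>u = X i\<close> Y by simp
        hence "\<exists>w. (Y j, w) \<in> C \<or> (w, Y j) \<in> C" by blast
        hence "s (Y j) = mx (s (X i))" using G1[OF h] Ys[of j] by simp
        then show ?thesis using \<open>u = X i\<close> Y mx by simp
      qed
    next
      case (Y a)
      show ?thesis
      proof (cases v)
        case (X i)
        have h: "(Y a, X i) \<in> C" using uv \<open>u = Y a\<close> X by simp
        hence "\<exists>w. (Y a, w) \<in> C \<or> (w, Y a) \<in> C" by blast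
        hence "s (Y a) = mn (s (X i))" using G2[OF h] Ys[of a] by simp
        then show ?thesis using \<open>u = Y a\<close> X mn by simp
      next
        case (Y b)
        have ab: "(Y a, Y b) \<in> C" using uv \<open>u = Y a\<close> \<open>v = Y b\<close> by simp
        have sa: "s (Y a) = G s a" by (rule Ys) (use ab in blast)
        have sb: "s (Y b) = G s b" by (rule Ys) (use ab in blast)
        show ?thesis
        proof (cases "\<exists>i. (X i, Y a) \<in> C")
          case True
          then obtain i where i: "(X i, Y a) \<in> C" by blast
          hence "(X i, Y b) \<in> C" using ab tr transD by fast
          then show ?thesis using G1 i sa sb \<open>u = Y a\<close> \<open>v = Y b\<close> by simp
        next
          case F1: False
          show ?thesis
          proof (cases "\<exists>i. (Y a, X i) \<in> C")
            case True
            then obtain i where i: "(Y a, X i) \<in> C" by blast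
            have ga: "G s a = mn (s (X i))" using G2 i by blast
            show ?thesis
            proof (cases "\<exists>i. (X i, Y b) \<in> C")
              case True
              then obtain i' where i': "(X i', Y b) \<in> C" by blast
              have "G s b = mx (s (X i'))" using G1 i' by blast
              then show ?thesis using ga sa sb \<open>u = Y a\<close> \<open>v = Y b\<close> mnx by simp
            next
              case F2: False
              show ?thesis
              proof (cases "\<exists>i. (Y b, X i) \<in> C")
                case True
                then obtain i' where i': "(Y b, X i') \<in> C" by blast
                have "(Y a, X i') \<in> C" using ab i' tr transD by fast
                hence "i' = i" using dn i by blast
                hence "G s b = mn (s (X i))" using G2 i' by blast
                then show ?thesis using ga sa sb \<open>u = Y a\<close> \<open>v = Y b\<close> by simp
              next
                case False
                hence "G s b = p" using G3 F2 by blast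
                then show ?thesis using ga sa sb \<open>u = Y a\<close> \<open>v = Y b\<close> pmn pmx by simp
              qed
            qed
          next
            case F1b: False
            have ga: "G s a = p" using G3 F1 F1b by blast
            have nb: "\<not> (\<exists>i. (Y b, X i) \<in> C)"
            proof
              assume "\<exists>i. (Y b, X i) \<in> C"
              then obtain i where "(Y b, X i) \<in> C" by blast
              hence "(Y a, X i) \<in> C" using ab tr transD by fast
              thus False using F1b by blast
            qed
            show ?thesis
            proof (cases "\<exists>i. (X i, Y b) \<in> C")
              case True
              then obtain i' where i': "(X i', Y b) \<in> C" by blast
              have "G s b = mx (s (X i'))" using G1 i' by blast
              then show ?thesis using ga sa sb \<open>u = Y a\<close> \<open>v = Y b\<close> pmn pmx by simp
            next
              case False
              hence "G s b = p" using G3 nb by blast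
              then show ?thesis using ga sa sb \<open>u = Y a\<close> \<open>v = Y b\<close> by simp
            qed
          qed
        qed
      qed
    qed
  qed
  have "models_aux C l l (\<lambda>_. undefined :: 'a)"
  proof (rule strategy[of l G C l])
    show "\<And>s t j. 1 \<le> j \<Longrightarrow> j \<le> l \<Longrightarrow> \<forall>i\<le>j. s (X i) = t (X i) \<Longrightarrow> G s j = G t j"
      by (rule dep)
    show "\<And>s. \<forall>j. 1 \<le> j \<and> j \<le> l \<longrightarrow> s (Y j) = G s j \<Longrightarrow> holds C s"
      by (rule win)
    show "l \<le> l" by simp
    show "\<forall>j. 1 \<le> j \<and> j \<le> l - l \<longrightarrow> (\<lambda>_. undefined :: 'a) (Y j) = G (\<lambda>_. undefined) j"
      by simp
  qed
  thus ?thesis unfolding models_def .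
qed

end
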